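(* (a) For every real $\alpha\le -1$, $\mathcal{M}_\alpha\subset\mathcal{U}$. (b) For every $\alpha$ with $0\le\alpha\le 1$, $\mathcal{M}_\alpha$ is not a subset of $\mathcal{U}$.
   Context: Let $\mathbb{D}=\{z\in\mathbb{C}:|z|<1\}$ and let $\mathcal{A}$ be the family of functions $f$ analytic in $\mathbb{D}$ with $f(0)=0$, $f'(0)=1$. The class $\mathcal{U}$ consists of all $f\in\mathcal{A}$ such that $\left|\left[\frac{z}{f(z)}\right]^2 f'(z)-1\right|<1$ for all $z\in\mathbb{D}$. For real $\alpha$, the class $\mathcal{M}_\alpha$ of $\alpha$-convex functions consists of all $f\in\mathcal{A}$ with $\frac{f(z)f'(z)}{z}\ne 0$ for $z\in\mathbb{D}$ and $$\operatorname{Re}\left\{(1-\alpha)\frac{zf'(z)}{f(z)}+\alpha\left[1+\frac{zf''(z)}{f'(z)}\right]\right\}>0\quad (z\in\mathbb{D}).$$ *)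

theory Defs
  imports "HOL-Complex_Analysis.Complex_Analysis"
begin

definition classA :: "(complex \<Rightarrow> complex) set" where
  "classA = {f. f analytic_on ball 0 1 \<and> f 0 = 0 \<and> deriv f 0 = 1}"

text \<open>At z = 0 the expression (z/f z)^2 f'(z) is understood as its removable
  value 1, so the defining inequality is imposed for z \<noteq> 0 only.\<close>
definition classU :: "(complex \<Rightarrow> complex) set" where
  "classU = {f \<in> classA. \<forall>z\<in>ball 0 1. z \<noteq> 0 \<longrightarrow>
      cmod ((z / f z)^2 * deriv f z - 1) < 1}"

text \<open>f(z) f'(z)/z \<noteq> 0 on the disc means f z \<noteq> 0 for z \<noteq> 0 and f' z \<noteq> 0
  (at z = 0 the quotient has value f'(0)^2 = 1). At z = 0 the real-part
  expression equals 1 > 0 automatically, so it is imposed for z \<noteq> 0.\<close>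
definition alpha_convex :: "real \<Rightarrow> (complex \<Rightarrow> complex) set" where
  "alpha_convex \<alpha> = {f \<in> classA.
      (\<forall>z\<in>ball 0 1. z \<noteq> 0 \<longrightarrow> f z \<noteq> 0) \<and>
      (\<forall>z\<in>ball 0 1. deriv f z \<noteq> 0) \<and>
      (\<forall>z\<in>ball 0 1. z \<noteq> 0 \<longrightarrow>
         Re ((1 - of_real \<alpha>) * (z * deriv f z / f z)
             + of_real \<alpha> * (1 + z * deriv (deriv f) z / deriv f z)) > 0)}"

end

theory Submission
  imports Defs
begin

lemma boundary_max_re:
  fixes g :: "complex \<Rightarrow> complex"
  assumes der: "(g has_field_derivative g') (at z0)"
  and le: "\<And>z. norm z \<le> norm z0 \<Longrightarrow> Re (g z) \<le> Re (g z0)"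
  shows "Im (z0 * g') = 0 \<and> Re (z0 * g') \<ge> 0"
proof
  define c where "c = (\<lambda>t::real. z0 * exp (\<i> * of_real t))"
  have dc0: "((\<lambda>x::complex. z0 * exp (\<i> * x)) has_field_derivative (z0 * \<i>)) (at (of_real 0))"
    by (rule derivative_eq_intros refl | simp)+
  have dc: "(c has_vector_derivative (z0 * \<i>)) (at 0)"
    unfolding c_def using has_vector_derivative_real_field[OF dc0] by simp
  have c0: "c 0 = z0" by (simp add: c_def)
  have "((g \<circ> c) has_vector_derivative (z0 * \<i> * g')) (at 0)"
    by (rule field_vector_diff_chain_at[OF dc]) (use der c0 in simp)
  hence d1: "((\<lambda>t. Re ((g \<circ> c) t)) has_field_derivative Re (z0 * \<i> * g')) (at 0)"
    by (rule has_field_derivative_Re)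
  have "Re (z0 * \<i> * g') = 0"
  proof (rule DERIV_local_max[OF d1, of 1])
    show "\<forall>y. \<bar>0 - y\<bar> < 1 \<longrightarrow> Re ((g \<circ> c) y) \<le> Re ((g \<circ> c) 0)"
      using le by (auto simp: c_def norm_mult)
  qed simp
  thus "Im (z0 * g') = 0" by simp
next
  define c where "c = (\<lambda>t::real. of_real t * z0)"
  have dc0: "((\<lambda>x::complex. x * z0) has_field_derivative z0) (at (of_real 1))"
    by (rule derivative_eq_intros refl | simp)+
  have dc: "(c has_vector_derivative z0) (at 1)"
    unfolding c_def using has_vector_derivative_real_field[OF dc0] by simp
  have c0: "c 1 = z0" by (simp add: c_def)
  have "((g \<circ> c) has_vector_derivative (z0 * g')) (at 1)"
    by (rule field_vector_diff_chain_at[OF dc]) (use der c0 in simp)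
  hence d1: "((\<lambda>t. Re ((g \<circ> c) t)) has_field_derivative Re (z0 * g')) (at 1)"
    by (rule has_field_derivative_Re)
  show "Re (z0 * g') \<ge> 0"
  proof (rule ccontr)
    assume "\<not> Re (z0 * g') \<ge> 0"
    then obtain d where d: "d > 0" "\<And>h. h > 0 \<Longrightarrow> h < d \<Longrightarrow> Re ((g \<circ> c) 1) < Re ((g \<circ> c) (1 - h))"
      using DERIV_neg_dec_left[OF d1] by force
    define h where "h = min (d/2) (1/2)"
    have "Re ((g \<circ> c) 1) < Re ((g \<circ> c) (1 - h))" using d h_def by auto
    moreover have "norm (c (1 - h)) \<le> norm z0"
    proof -
      have "0 \<le> 1 - h" "1 - h \<le> 1" using d by (auto simp: h_def)
      hence "norm (of_real (1 - h) :: complex) \<le> 1" by (subst norm_of_real) simp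
      thus ?thesis by (simp add: c_def norm_mult mult_left_le_one_le del: of_real_diff)
    qed
    ultimately show False using le c0 by force
  qed
qed

lemma first_hit:
  fixes \<phi> :: "complex \<Rightarrow> real"
  assumes cont: "continuous_on (ball 0 1) \<phi>" and neg0: "\<phi> 0 < 0"
    and z1: "z1 \<in> ball 0 1" "\<phi> z1 \<ge> 0"
  obtains z0 where "z0 \<in> ball 0 1" "z0 \<noteq> 0" "\<phi> z0 = 0"
    "\<And>z. norm z < norm z0 \<Longrightarrow> \<phi> z < 0"
    "\<And>z. norm z \<le> norm z0 \<Longrightarrow> \<phi> z \<le> 0"
proof -
  define \<rho> where "\<rho> = norm z1"
  have \<rho>1: "\<rho> < 1" using z1 by (simp add: \<rho>_def)
  have sub: "cball 0 \<rho> \<subseteq> ball 0 1" using \<rho>1 by auto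
  define K where "K = cball 0 \<rho> \<inter> \<phi> -` {0..}"
  have "closed K" unfolding K_def
    by (rule continuous_closed_preimage) (use continuous_on_subset[OF cont sub] in auto)
  hence "compact K" unfolding K_def
    by (metis Int_absorb1 K_def compact_Int_closed compact_cball inf_le1)
  moreover have "z1 \<in> K" using z1 by (auto simp: K_def \<rho>_def)
  ultimately obtain z0 where z0: "z0 \<in> K" "\<And>z. z \<in> K \<Longrightarrow> norm z0 \<le> norm z"
    using compact_attains_inf[of "norm ` K"]
    by (metis (no_types, lifting) continuous_on_norm_id compact_continuous_image empty_iff image_iff)
  have z0b: "z0 \<in> ball 0 1" using z0(1) \<rho>1 by (auto simp: K_def)
  have nz: "z0 \<noteq> 0" using z0(1) neg0 by (auto simp: K_def)
  have lt: "\<phi> z < 0" if "norm z < norm z0" for z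
  proof (rule ccontr)
    assume "\<not> \<phi> z < 0"
    moreover have "norm z \<le> \<rho>" using that z0(1) by (auto simp: K_def)
    ultimately have "z \<in> K" by (auto simp: K_def)
    thus False using z0(2) that by fastforce
  qed
  have le: "\<phi> z \<le> 0" if "norm z \<le> norm z0" for z
  proof -
    have r: "norm z0 > 0" using nz by simp
    have zc: "z \<in> closure (ball 0 (norm z0))" using that r by (simp add: closure_ball)
    have "cball 0 (norm z0) \<subseteq> ball 0 1" using z0b by auto
    hence "continuous_on (closure (ball 0 (norm z0))) (\<lambda>z. - \<phi> z)"
      using r by (auto simp: closure_ball intro!: continuous_intros continuous_on_subset[OF cont])
    from continuous_ge_on_closure[OF this zc, of 0] lt show ?thesis by force
  qed
  have "\<phi> z0 = 0" using le[of z0] z0(1) by (auto simp: K_def)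
  from that[OF z0b nz this lt le] show ?thesis .
qed

lemma F_props:
  assumes "f \<in> classA" and nz: "\<And>z. z \<in> ball 0 1 \<Longrightarrow> z \<noteq> 0 \<Longrightarrow> f z \<noteq> 0"
  assumes F_def: "F = (\<lambda>z. if z = 0 then deriv f 0 else (f z - f 0) / (z - 0))"
  shows "F holomorphic_on ball 0 1" "F 0 = 1" "\<And>z. z \<noteq> 0 \<Longrightarrow> F z = f z / z"
    "\<And>z. z \<in> ball 0 1 \<Longrightarrow> F z \<noteq> 0"
proof -
  have hol: "f holomorphic_on ball 0 1" using assms(1) by (auto simp: classA_def analytic_imp_holomorphic)
  show "F holomorphic_on ball 0 1" unfolding F_def by (rule pole_lemma_open[OF hol open_ball])
  show "F 0 = 1" using assms(1) by (simp add: F_def classA_def)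
  show "\<And>z. z \<noteq> 0 \<Longrightarrow> F z = f z / z" using assms(1) by (simp add: F_def classA_def)
  show "\<And>z. z \<in> ball 0 1 \<Longrightarrow> F z \<noteq> 0" using assms(1) nz by (auto simp: F_def classA_def)
qed

lemma alpha_starlike:
  assumes f: "f \<in> alpha_convex \<alpha>"
  shows "\<And>z. z \<in> ball 0 1 \<Longrightarrow> z \<noteq> 0 \<Longrightarrow> Re (z * deriv f z / f z) > 0"
proof -
  have fA: "f \<in> classA" and nz: "\<And>z. z \<in> ball 0 1 \<Longrightarrow> z \<noteq> 0 \<Longrightarrow> f z \<noteq> 0"
    and dnz: "\<And>z. z \<in> ball 0 1 \<Longrightarrow> deriv f z \<noteq> 0"
    and cond: "\<And>z. z \<in> ball 0 1 \<Longrightarrow> z \<noteq> 0 \<Longrightarrow>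
         Re ((1 - of_real \<alpha>) * (z * deriv f z / f z)
             + of_real \<alpha> * (1 + z * deriv (deriv f) z / deriv f z)) > 0"
    using f by (auto simp: alpha_convex_def)
  have hol: "f holomorphic_on ball 0 1" using fA by (auto simp: classA_def analytic_imp_holomorphic)
  have hol1: "deriv f holomorphic_on ball 0 1" by (rule holomorphic_deriv[OF hol open_ball])
  have hol2: "deriv (deriv f) holomorphic_on ball 0 1" by (rule holomorphic_deriv[OF hol1 open_ball])
  define F where "F = (\<lambda>z. if z = 0 then deriv f 0 else (f z - f 0) / (z - 0))"
  note FP = F_props[OF fA nz F_def]
  define p where "p = (\<lambda>z. deriv f z / F z)"
  have holp: "p holomorphic_on ball 0 1" unfolding p_def using FP hol1 by (auto intro!: holomorphic_intros)
  have p0: "p 0 = 1" using fA FP by (simp add: p_def classA_def)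
  have pz: "p z = z * deriv f z / f z" if "z \<noteq> 0" for z using that FP by (simp add: p_def)
  show "Re (z * deriv f z / f z) > 0" if zz: "z \<in> ball 0 1" "z \<noteq> 0" for z
  proof (rule ccontr)
    assume "\<not> Re (z * deriv f z / f z) > 0"
    hence g1: "(\<lambda>z. - Re (p z)) z \<ge> 0" using pz zz by simp
    have c1: "continuous_on (ball 0 1) (\<lambda>z. - Re (p z))"
      using holomorphic_on_imp_continuous_on[OF holp] by (auto intro!: continuous_intros)
    have n1: "(\<lambda>z. - Re (p z)) 0 < 0" using p0 by simp
    obtain z0 where z0: "z0 \<in> ball 0 1" "z0 \<noteq> 0" "- Re (p z0) = 0"
      "\<And>w. norm w < norm z0 \<Longrightarrow> - Re (p w) < 0"
      "\<And>w. norm w \<le> norm z0 \<Longrightarrow> - Re (p w) \<le> 0"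
      by (rule first_hit[OF c1 n1 zz(1) g1], rule that, assumption+)
    define a where "a = f z0"
    define b where "b = deriv f z0"
    define c where "c = deriv (deriv f) z0"
    define D where "D = ((1 * b + z0 * c) * a - z0 * b * b) / (a * a)"
    have anz: "a \<noteq> 0" using nz z0 by (simp add: a_def)
    have bnz: "b \<noteq> 0" using dnz z0 by (simp add: b_def)
    have hf: "(f has_field_derivative b) (at z0)" unfolding b_def by (rule holomorphic_derivI[OF hol open_ball z0(1)])
    have hd: "(deriv f has_field_derivative c) (at z0)" unfolding c_def by (rule holomorphic_derivI[OF hol1 open_ball z0(1)])
    have hm: "((\<lambda>z. z * deriv f z) has_field_derivative (1 * b + z0 * c)) (at z0)"
      using DERIV_mult[OF DERIV_ident hd] by (simp add: b_def mult.commute)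
    have d1: "((\<lambda>z. z * deriv f z / f z) has_field_derivative D) (at z0)"
      using DERIV_divide[OF hm hf] anz by (simp add: D_def a_def b_def)
    have d2: "(p has_field_derivative D) (at z0)"
      by (rule has_field_derivative_transform_within_open[OF d1, of "ball 0 1 - {0}"])
         (use z0 pz in auto)
    have d3: "((\<lambda>z. - p z) has_field_derivative - D) (at z0)"
      by (rule DERIV_minus[OF d2])
    have "Im (z0 * - D) = 0"
      using boundary_max_re[OF d3] z0(3,5) by force
    hence real: "z0 * D = of_real (Re (z0 * D))" by (simp add: complex_eq_iff)
    define P where "P = z0 * b / a"
    have RP: "Re P = 0" using z0(3) pz[OF z0(2)] by (simp add: P_def a_def b_def)
    have Pnz: "P \<noteq> 0" using anz bnz z0(2) by (simp add: P_def)
    have eq: "(1 - of_real \<alpha>) * (z0 * b / a) + of_real \<alpha> * (1 + z0 * c / b)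
        = P + of_real \<alpha> * (z0 * D) / P"
    proof -
      have "z0 * D / P = 1 + z0 * c / b - P"
        using anz bnz z0(2) by (simp add: P_def D_def divide_simps)
      hence "of_real \<alpha> * (z0 * D) / P = of_real \<alpha> * (1 + z0 * c / b - P)" by (metis times_divide_eq_right)
      hence "P + of_real \<alpha> * (z0 * D) / P = P + of_real \<alpha> * (1 + z0 * c / b - P)" by simp
      moreover have "(1 - of_real \<alpha>) * (z0 * b / a) + of_real \<alpha> * (1 + z0 * c / b)
          = P + of_real \<alpha> * (1 + z0 * c / b - P)"
        unfolding P_def[symmetric] by (simp add: algebra_simps)
      ultimately show ?thesis by simp
    qed
    have "Re (of_real \<alpha> * (z0 * D) / P) = 0"
      apply (subst real) using RP by (simp add: Re_divide)
    hence "Re ((1 - of_real \<alpha>) * (z0 * b / a) + of_real \<alpha> * (1 + z0 * c / b)) = 0"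
      using eq RP by simp
    thus False using cond[OF z0(1,2)] by (simp add: a_def b_def c_def)
  qed
qed

lemma re_ofreal_mult: "Re (complex_of_real r * z) = r * Re z"
  by simp

lemma re_unit_frac:
  fixes w :: complex
  assumes "norm w = 1" "w \<noteq> 1"
  shows "Re (w / (1 - w)) = - 1/2"
proof -
  have n: "(Re w)^2 + (Im w)^2 = 1" using assms(1) by (simp add: cmod_def)
  have "Re w \<noteq> 1"
  proof
    assume "Re w = 1"
    hence "Im w = 0" using n by simp
    thus False using \<open>Re w = 1\<close> assms(2) by (simp add: complex_eq_iff)
  qed
  hence d: "(1 - Re w)^2 + (Im w)^2 = 2 * (1 - Re w)" "1 - Re w \<noteq> 0" using n by (auto simp: power2_eq_square algebra_simps)
  have "Re (w / (1 - w)) = (Re w * (1 - Re w) + Im w * (- Im w)) / ((1 - Re w)^2 + (Im w)^2)"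
    by (simp add: Re_divide)
  also have "\<dots> = (Re w - 1) / (2 * (1 - Re w))"
    using n d(1) by (simp add: algebra_simps power2_eq_square)
  also have "\<dots> = - 1/2" using d(2) by (simp add: field_simps)
  finally show ?thesis .
qed

lemma part_a:
  assumes al: "\<alpha> \<le> -1" and f: "f \<in> alpha_convex \<alpha>"
  shows "f \<in> classU"
proof -
  have fA: "f \<in> classA" and nz: "\<And>z. z \<in> ball 0 1 \<Longrightarrow> z \<noteq> 0 \<Longrightarrow> f z \<noteq> 0"
    and dnz: "\<And>z. z \<in> ball 0 1 \<Longrightarrow> deriv f z \<noteq> 0"
    and cond: "\<And>z. z \<in> ball 0 1 \<Longrightarrow> z \<noteq> 0 \<Longrightarrow>
         Re ((1 - of_real \<alpha>) * (z * deriv f z / f z)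
             + of_real \<alpha> * (1 + z * deriv (deriv f) z / deriv f z)) > 0"
    using f by (auto simp: alpha_convex_def)
  have hol: "f holomorphic_on ball 0 1" using fA by (auto simp: classA_def analytic_imp_holomorphic)
  have hol1: "deriv f holomorphic_on ball 0 1" by (rule holomorphic_deriv[OF hol open_ball])
  define F where "F = (\<lambda>z. if z = 0 then deriv f 0 else (f z - f 0) / (z - 0))"
  note FP = F_props[OF fA nz F_def]
  define Q where "Q = (\<lambda>z. deriv f z / (F z)^2)"
  have holQ: "Q holomorphic_on ball 0 1" unfolding Q_def using FP hol1 by (auto intro!: holomorphic_intros)
  have Q0: "Q 0 = 1" using fA FP by (simp add: Q_def classA_def)
  have Qz: "Q z = (z / f z)^2 * deriv f z" if "z \<in> ball 0 1" "z \<noteq> 0" for z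
    using that FP nz[OF that] by (simp add: Q_def power_divide)
  define h where "h = (\<lambda>z. inverse (F z))"
  have holh: "h holomorphic_on ball 0 1" unfolding h_def using FP by (auto intro!: holomorphic_intros)
  have holh1: "deriv h holomorphic_on ball 0 1" by (rule holomorphic_deriv[OF holh open_ball])
  have h0: "h 0 = 1" using FP by (simp add: h_def)
  have dh: "deriv h z = 1 / f z - z * deriv f z / (f z)^2" if z: "z \<in> ball 0 1" "z \<noteq> 0" for z
  proof -
    have hf: "(f has_field_derivative deriv f z) (at z)" by (rule holomorphic_derivI[OF hol open_ball z(1)])
    have "((\<lambda>w. w / f w) has_field_derivative (1 * f z - z * deriv f z) / (f z * f z)) (at z)"
      by (rule DERIV_divide[OF DERIV_ident hf nz[OF z]])
    hence "(h has_field_derivative (1 * f z - z * deriv f z) / (f z * f z)) (at z)"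
      by (rule has_field_derivative_transform_within_open[of _ _ _ "ball 0 1 - {0}"])
         (use z FP in \<open>auto simp: h_def\<close>)
    hence "deriv h z = (1 * f z - z * deriv f z) / (f z * f z)" by (rule DERIV_imp_deriv)
    thus ?thesis using nz[OF z] by (simp add: field_simps power2_eq_square)
  qed
  have QH: "Q z = h z - z * deriv h z" if z: "z \<in> ball 0 1" for z
  proof (cases "z = 0")
    case True thus ?thesis using Q0 h0 by simp
  next
    case False
    have "h z = z / f z" using FP False by (simp add: h_def)
    have "h z - z * deriv h z = z / f z - z * (1 / f z - z * deriv f z / (f z)^2)"
      by (simp only: \<open>h z = z / f z\<close> dh[OF z False])
    also have "\<dots> = (z / f z)^2 * deriv f z"
      using nz[OF z False] by (simp add: field_simps power2_eq_square)
    finally show ?thesis using Qz[OF z False] by simp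
  qed
  have dQ0: "(Q has_field_derivative 0) (at 0)"
  proof -
    have "((\<lambda>z. h z - z * deriv h z) has_field_derivative
           (deriv h 0 - (1 * deriv h 0 + deriv (deriv h) 0 * 0))) (at 0)"
      by (intro DERIV_diff DERIV_mult DERIV_ident holomorphic_derivI[OF holh open_ball]
          holomorphic_derivI[OF holh1 open_ball]) auto
    hence "((\<lambda>z. h z - z * deriv h z) has_field_derivative 0) (at 0)" by simp
    thus ?thesis
      by (rule has_field_derivative_transform_within_open[of _ _ _ "ball 0 1"]) (use QH in auto)
  qed
  define \<omega> where "\<omega> = (\<lambda>z. 1 - Q z)"
  have hol\<omega>: "\<omega> holomorphic_on ball 0 1" unfolding \<omega>_def using holQ by (auto intro!: holomorphic_intros)
  have \<omega>0: "\<omega> 0 = 0" using Q0 by (simp add: \<omega>_def)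
  have d\<omega>0: "deriv \<omega> 0 = 0"
  proof -
    have "(\<omega> has_field_derivative 0 - 0) (at 0)" unfolding \<omega>_def by (intro DERIV_diff DERIV_const dQ0)
    thus ?thesis by (simp add: DERIV_imp_deriv)
  qed
  define \<omega>1 where "\<omega>1 = (\<lambda>z. if z = 0 then deriv \<omega> 0 else (\<omega> z - \<omega> 0) / (z - 0))"
  have hol\<omega>1: "\<omega>1 holomorphic_on ball 0 1" unfolding \<omega>1_def by (rule pole_lemma_open[OF hol\<omega> open_ball])
  have \<omega>10: "\<omega>1 0 = 0" using d\<omega>0 by (simp add: \<omega>1_def)
  define \<psi> where "\<psi> = (\<lambda>z. if z = 0 then deriv \<omega>1 0 else (\<omega>1 z - \<omega>1 0) / (z - 0))"
  have hol\<psi>: "\<psi> holomorphic_on ball 0 1" unfolding \<psi>_def by (rule pole_lemma_open[OF hol\<omega>1 open_ball])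
  have \<psi>z: "\<psi> z = \<omega> z / z^2" if "z \<noteq> 0" for z
    using that \<omega>10 \<omega>0 by (simp add: \<psi>_def \<omega>1_def power2_eq_square)
  show ?thesis
  proof (rule ccontr)
    assume "f \<notin> classU"
    then obtain z1 where z1: "z1 \<in> ball 0 1" "z1 \<noteq> 0" "norm ((z1 / f z1)^2 * deriv f z1 - 1) \<ge> 1"
      using fA by (auto simp: classU_def)
    have g1: "(\<lambda>z. norm (\<omega> z) - 1) z1 \<ge> 0"
      using z1 Qz[OF z1(1,2)] by (simp add: \<omega>_def norm_minus_commute)
    have c1: "continuous_on (ball 0 1) (\<lambda>z. norm (\<omega> z) - 1)"
      using holomorphic_on_imp_continuous_on[OF hol\<omega>] by (auto intro!: continuous_intros)
    have n1: "(\<lambda>z. norm (\<omega> z) - 1) 0 < 0" using \<omega>0 by simp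
    obtain z0 where z0: "z0 \<in> ball 0 1" "z0 \<noteq> 0" "norm (\<omega> z0) - 1 = 0"
      "\<And>w. norm w < norm z0 \<Longrightarrow> norm (\<omega> w) - 1 < 0"
      "\<And>w. norm w \<le> norm z0 \<Longrightarrow> norm (\<omega> w) - 1 \<le> 0"
      by (rule first_hit[OF c1 n1 z1(1) g1], rule that, assumption+)
    define r where "r = norm z0"
    have r0: "r > 0" using z0 by (simp add: r_def)
    have sub: "cball 0 r \<subseteq> ball 0 1" using z0(1) by (auto simp: r_def)
    have max\<psi>: "norm (\<psi> z) \<le> 1 / r^2" if zr: "norm z \<le> r" for z
    proof (rule maximum_modulus_frontier[of \<psi> "cball 0 r"])
      show "\<psi> holomorphic_on interior (cball 0 r)"
        using holomorphic_on_subset[OF hol\<psi>, of "ball 0 r"] sub ball_subset_cball by force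
      show "continuous_on (closure (cball 0 r)) \<psi>"
        using continuous_on_subset[OF holomorphic_on_imp_continuous_on[OF hol\<psi>] sub] by simp
      show "bounded (cball 0 r)" by simp
      show "z \<in> cball 0 r" using zr by simp
      fix w :: complex assume "w \<in> frontier (cball 0 r)"
      hence w: "norm w = r" using r0 by (simp add: frontier_cball)
      hence "w \<noteq> 0" using r0 by auto
      hence "\<psi> w = \<omega> w / w^2" by (rule \<psi>z)
      moreover have "norm (\<omega> w) \<le> 1" using z0(5)[of w] w by (simp add: r_def)
      ultimately show "norm (\<psi> w) \<le> 1 / r^2"
        using w r0 by (simp add: norm_divide norm_power divide_right_mono)
    qed
    define \<psi>0 where "\<psi>0 = \<psi> z0"
    have n\<psi>0: "norm \<psi>0 = 1 / r^2" using \<psi>z[OF z0(2)] z0(3) by (simp add: \<psi>0_def r_def norm_divide norm_power)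
    have \<psi>0nz: "\<psi>0 \<noteq> 0" using n\<psi>0 r0 by auto
    have cn: "\<psi>0 * cnj \<psi>0 = of_real ((norm \<psi>0)^2)" by (rule complex_norm_square[symmetric])
    define \<psi>1 where "\<psi>1 = deriv \<psi> z0"
    have d\<psi>: "(\<psi> has_field_derivative \<psi>1) (at z0)" unfolding \<psi>1_def
      by (rule holomorphic_derivI[OF hol\<psi> open_ball z0(1)])
    have dg: "((\<lambda>z. \<psi> z * cnj \<psi>0) has_field_derivative \<psi>1 * cnj \<psi>0) (at z0)"
      by (rule DERIV_cmult_right[OF d\<psi>])
    have leg: "Re (\<psi> z * cnj \<psi>0) \<le> Re (\<psi> z0 * cnj \<psi>0)" if "norm z \<le> norm z0" for z
    proof -
      have "Re (\<psi> z * cnj \<psi>0) \<le> norm (\<psi> z * cnj \<psi>0)" by (rule complex_Re_le_cmod)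
      also have "\<dots> = norm (\<psi> z) * norm \<psi>0" by (simp add: norm_mult)
      also have "\<dots> \<le> 1 / r^2 * norm \<psi>0"
        using mult_right_mono[OF max\<psi>[of z] norm_ge_zero[of \<psi>0]] that by (simp add: r_def)
      also have "\<dots> = (norm \<psi>0)^2" using n\<psi>0 by (simp add: power2_eq_square)
      also have "\<dots> = Re (\<psi> z0 * cnj \<psi>0)" using cn by (simp add: \<psi>0_def)
      finally show ?thesis .
    qed
    have bm: "Im (z0 * (\<psi>1 * cnj \<psi>0)) = 0 \<and> Re (z0 * (\<psi>1 * cnj \<psi>0)) \<ge> 0"
      by (rule boundary_max_re[OF dg leg])
    define \<sigma> where "\<sigma> = Re (z0 * (\<psi>1 * cnj \<psi>0))"
    have sreal: "z0 * (\<psi>1 * cnj \<psi>0) = of_real \<sigma>" using bm by (simp add: \<sigma>_def complex_eq_iff)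
    have \<sigma>0: "\<sigma> \<ge> 0" using bm by (simp add: \<sigma>_def)
    define k where "k = 2 + \<sigma> / (norm \<psi>0)^2"
    have k2: "k \<ge> 2" using \<sigma>0 by (simp add: k_def)
    have e1: "z0 * \<psi>1 = of_real \<sigma> * \<psi>0 / of_real ((norm \<psi>0)^2)"
    proof -
      have "z0 * \<psi>1 * of_real ((norm \<psi>0)^2) = z0 * (\<psi>1 * cnj \<psi>0) * \<psi>0"
        using cn by (simp add: algebra_simps)
      also have "\<dots> = of_real \<sigma> * \<psi>0" using sreal by simp
      finally show ?thesis using \<psi>0nz by (simp add: field_simps)
    qed
    define w where "w = \<omega> z0"
    have wz: "w = z0^2 * \<psi>0" using \<psi>z[OF z0(2)] z0(2) by (simp add: w_def \<psi>0_def)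
    have nw: "norm w = 1" using z0(3) by (simp add: w_def)
    have d\<omega>1: "(\<omega> has_field_derivative (2 * z0 * \<psi>0 + z0^2 * \<psi>1)) (at z0)"
    proof -
      have "((\<lambda>z. z^2 * \<psi> z) has_field_derivative (2 * z0 * \<psi>0 + z0^2 * \<psi>1)) (at z0)"
        by (rule DERIV_cong[OF DERIV_mult[OF DERIV_power[OF DERIV_ident] d\<psi>]])
           (simp add: \<psi>0_def algebra_simps)
      thus ?thesis
        by (rule has_field_derivative_transform_within_open[of _ _ _ "ball 0 1 - {0}"])
           (use z0 \<psi>z in auto)
    qed
    define a where "a = f z0"
    define b where "b = deriv f z0"
    define c where "c = deriv (deriv f) z0"
    have anz: "a \<noteq> 0" using nz z0 by (simp add: a_def)
    have bnz: "b \<noteq> 0" using dnz z0 by (simp add: b_def)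
    have hf: "(f has_field_derivative b) (at z0)" unfolding b_def by (rule holomorphic_derivI[OF hol open_ball z0(1)])
    have hd: "(deriv f has_field_derivative c) (at z0)" unfolding c_def by (rule holomorphic_derivI[OF hol1 open_ball z0(1)])
    define Dq where "Dq = 2 * ((a - z0 * b) / (a * a)) * (z0 / a) * b + c * (z0 / a)^2"
    have dq: "((\<lambda>z. (z / f z)^2 * deriv f z) has_field_derivative Dq) (at z0)"
      by (rule DERIV_cong[OF DERIV_mult[OF DERIV_power[OF DERIV_divide[OF DERIV_ident hf]] hd]])
         (use anz in \<open>simp_all add: a_def b_def Dq_def\<close>)
    have d\<omega>2: "(\<omega> has_field_derivative 0 - Dq) (at z0)"
    proof -
      have "((\<lambda>z. 1 - (z / f z)^2 * deriv f z) has_field_derivative 0 - Dq) (at z0)"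
        by (rule DERIV_diff[OF DERIV_const dq])
      thus ?thesis
        by (rule has_field_derivative_transform_within_open[of _ _ _ "ball 0 1 - {0}"])
           (use z0 Qz in \<open>auto simp: \<omega>_def\<close>)
    qed
    have Deq: "0 - Dq = 2 * z0 * \<psi>0 + z0^2 * \<psi>1" by (rule DERIV_unique[OF d\<omega>2 d\<omega>1])
    have key: "z0 * Dq = - w * of_real k"
    proof -
      have "z0 * Dq = - (2 * (z0^2 * \<psi>0) + z0^2 * (z0 * \<psi>1))"
      proof -
        have Dq': "Dq = - (2 * z0 * \<psi>0 + z0^2 * \<psi>1)" using Deq by (metis diff_0 minus_minus)
        show ?thesis unfolding Dq' by (simp add: algebra_simps power2_eq_square)
      qed
      also have "\<dots> = - (2 * w + w * of_real \<sigma> / of_real ((norm \<psi>0)^2))"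
        unfolding e1 wz by (simp add: algebra_simps)
      also have "\<dots> = - w * of_real k" by (simp add: k_def algebra_simps)
      finally show ?thesis .
    qed
    define Q1 where "Q1 = (z0 / a)^2 * b"
    have wQ: "w = 1 - Q1" using Qz[OF z0(1,2)] by (simp add: w_def \<omega>_def Q1_def a_def b_def)
    have Q1nz: "Q1 \<noteq> 0" using anz bnz z0(2) by (simp add: Q1_def)
    define P where "P = z0 * b / a"
    define T where "T = z0 * c / b"
    have e2: "z0 * Dq = Q1 * (2 - 2 * P + T)"
      using anz bnz z0(2) by (simp add: Dq_def Q1_def P_def T_def field_simps power2_eq_square)
    have Teq: "T = 2 * P - 2 - of_real k * (w / Q1)"
    proof -
      have "Q1 * (2 - 2 * P + T) = - w * of_real k" using e2 key by simp
      hence "2 - 2 * P + T = - w * of_real k / Q1" using Q1nz by (simp add: field_simps)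
      thus ?thesis by (simp add: algebra_simps)
    qed
    have ceq: "(1 - of_real \<alpha>) * P + of_real \<alpha> * (1 + T)
        = (1 + of_real \<alpha>) * P - of_real \<alpha> - of_real (\<alpha> * k) * (w / (1 - w))"
      unfolding Teq wQ by (simp add: algebra_simps)
    have w1: "w \<noteq> 1" using wQ Q1nz by auto
    have RP: "Re P > 0" using alpha_starlike[OF f z0(1,2)] by (simp add: P_def a_def b_def)
    have "Re ((1 - of_real \<alpha>) * P + of_real \<alpha> * (1 + T)) = (1 + \<alpha>) * Re P + \<alpha> * (k / 2 - 1)"
    proof -
      have r1: "Re (of_real (\<alpha> * k) * (w / (1 - w))) = \<alpha> * k * (- 1/2)"
        using re_unit_frac[OF nw w1] by (simp only: re_ofreal_mult)
      have r2: "Re ((1 + of_real \<alpha>) * P) = (1 + \<alpha>) * Re P"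
        by (metis re_ofreal_mult of_real_1 of_real_add)
      have "Re ((1 + of_real \<alpha>) * P - of_real \<alpha> - of_real (\<alpha> * k) * (w / (1 - w)))
          = Re ((1 + of_real \<alpha>) * P) - \<alpha> - Re (of_real (\<alpha> * k) * (w / (1 - w)))" by simp
      also have "\<dots> = (1 + \<alpha>) * Re P + \<alpha> * (k / 2 - 1)" unfolding r1 r2 by (simp add: algebra_simps)
      finally show ?thesis unfolding ceq .
    qed
    also have "\<dots> \<le> 0"
    proof -
      have "(1 + \<alpha>) * Re P \<le> 0" using al RP by (simp add: mult_nonpos_nonneg)
      moreover have "\<alpha> * (k / 2 - 1) \<le> 0" using al k2 by (simp add: mult_nonpos_nonneg)
      ultimately show ?thesis by simp
    qed
    finally show False using cond[OF z0(1,2)] by (simp add: P_def T_def a_def b_def c_def)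
  qed
qed

definition mlog :: "complex \<Rightarrow> complex" where "mlog = (\<lambda>z. - Ln (1 - z))"

lemma mlog_deriv:
  assumes "z \<in> ball 0 1"
  shows "(mlog has_field_derivative 1 / (1 - z)) (at z)"
proof -
  have "Re (1 - z) > 0" using assms complex_Re_le_cmod[of z] by auto
  hence nr: "1 - z \<notin> \<real>\<^sub>\<le>\<^sub>0" by (auto simp: complex_nonpos_Reals_iff)
  have d1: "((\<lambda>z. 1 - z) has_field_derivative (0 - 1)) (at z)" by (intro DERIV_diff DERIV_const DERIV_ident)
  have "((\<lambda>z. Ln (1 - z)) has_field_derivative inverse (1 - z) * (0 - 1)) (at z)"
    by (rule DERIV_chain2[where g="\<lambda>z. 1 - z", OF has_field_derivative_Ln[OF nr] d1])
  hence "((\<lambda>z. - Ln (1 - z)) has_field_derivative - (inverse (1 - z) * (0 - 1))) (at z)"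
    by (rule DERIV_minus)
  thus ?thesis by (simp add: mlog_def field_simps)
qed

lemma mlog_props:
  "mlog \<in> classA"
  "\<And>z. z \<in> ball 0 1 \<Longrightarrow> deriv mlog z = 1 / (1 - z)"
  "\<And>z. z \<in> ball 0 1 \<Longrightarrow> deriv (deriv mlog) z = 1 / (1 - z)^2"
  "\<And>z. z \<in> ball 0 1 \<Longrightarrow> z \<noteq> 0 \<Longrightarrow> mlog z \<noteq> 0"
proof -
  show dm: "deriv mlog z = 1 / (1 - z)" if "z \<in> ball 0 1" for z
    using mlog_deriv[OF that] by (rule DERIV_imp_deriv)
  have "mlog holomorphic_on ball 0 1"
    using mlog_deriv holomorphic_on_open[OF open_ball] by blast
  hence an: "mlog analytic_on ball 0 1" by (simp add: analytic_on_open)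
  show "mlog \<in> classA" using an dm[of 0] by (simp add: classA_def mlog_def)
  show "deriv (deriv mlog) z = 1 / (1 - z)^2" if z: "z \<in> ball 0 1" for z
  proof -
    have nz: "1 - z \<noteq> 0" using z by auto
    have d1: "((\<lambda>z. 1 - z) has_field_derivative (0 - 1)) (at z)" by (intro DERIV_diff DERIV_const DERIV_ident)
    have "((\<lambda>z. 1 / (1 - z)) has_field_derivative 1 / (1 - z)^2) (at z)"
      by (rule DERIV_cong[OF DERIV_divide[OF DERIV_const d1 nz]]) (simp add: power2_eq_square)
    hence "(deriv mlog has_field_derivative 1 / (1 - z)^2) (at z)"
      by (rule has_field_derivative_transform_within_open[of _ _ _ "ball 0 1"]) (use z dm in auto)
    thus ?thesis by (rule DERIV_imp_deriv)
  qed
  show "mlog z \<noteq> 0" if z: "z \<in> ball 0 1" "z \<noteq> 0" for z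
  proof
    assume "mlog z = 0"
    hence "Ln (1 - z) = 0" by (simp add: mlog_def)
    hence "exp (Ln (1 - z)) = 1" by simp
    moreover have "1 - z \<noteq> 0" using z by auto
    ultimately show False using z by simp
  qed
qed

lemma mlog_Y:
  assumes z: "z \<in> ball 0 1"
  shows "Re (1 + z * deriv (deriv mlog) z / deriv mlog z) > 0"
proof -
  have nz: "1 - z \<noteq> 0" using z by auto
  have nz2: "1 + z * z - z * 2 \<noteq> 0"
  proof -
    have "(1 - z) * (1 - z) \<noteq> 0" using nz by simp
    thus ?thesis by (simp add: algebra_simps)
  qed
  have "1 + z * deriv (deriv mlog) z / deriv mlog z = 1 / (1 - z)"
    using nz nz2 by (simp add: mlog_props(2)[OF z] mlog_props(3)[OF z] field_simps power2_eq_square)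
  moreover have "Re (1 - z) > 0" using z complex_Re_le_cmod[of z] by auto
  ultimately show ?thesis using nz by (simp add: Re_divide' )
qed

lemma mlog_conv: assumes "0 \<le> \<alpha>" "\<alpha> \<le> 1" shows "mlog \<in> alpha_convex \<alpha>"
proof -
  have base: "mlog \<in> classA" "\<And>z. z \<in> ball 0 1 \<Longrightarrow> z \<noteq> 0 \<Longrightarrow> mlog z \<noteq> 0"
     "\<And>z. z \<in> ball 0 1 \<Longrightarrow> deriv mlog z \<noteq> 0"
    using mlog_props by (auto simp: dist_norm)
  have c1: "mlog \<in> alpha_convex 1" using base mlog_Y by (auto simp: alpha_convex_def)
  show ?thesis unfolding alpha_convex_def
  proof (intro CollectI conjI ballI impI base)
    fix z assume z: "z \<in> ball (0::complex) 1" "z \<noteq> 0"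
    define X where "X = z * deriv mlog z / mlog z"
    define Y where "Y = 1 + z * deriv (deriv mlog) z / deriv mlog z"
    have RX: "Re X > 0" using alpha_starlike[OF c1 z] by (simp add: X_def)
    have RY: "Re Y > 0" using mlog_Y[OF z(1)] by (simp add: Y_def)
    have "Re ((1 - of_real \<alpha>) * X + of_real \<alpha> * Y) = (1 - \<alpha>) * Re X + \<alpha> * Re Y"
      by simp
    also have "\<dots> > 0"
    proof (cases "\<alpha> = 1")
      case True thus ?thesis using RY by simp
    next
      case False
      hence "(1 - \<alpha>) * Re X > 0" using assms RX by simp
      moreover have "\<alpha> * Re Y \<ge> 0" using assms RY by simp
      ultimately show ?thesis by linarith
    qed
    finally show "Re ((1 - of_real \<alpha>) * (z * deriv mlog z / mlog z)
             + of_real \<alpha> * (1 + z * deriv (deriv mlog) z / deriv mlog z)) > 0"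
      by (simp add: X_def Y_def)
  qed
qed

lemma mlog_notU: "mlog \<notin> classU"
proof
  assume U: "mlog \<in> classU"
  define z where "z = (complex_of_real (99/100))"
  have zb: "z \<in> ball 0 1" "z \<noteq> 0" by (auto simp: z_def)
  define L where "L = ln (100::real)"
  have Lpos: "L > 0" by (simp add: L_def)
  have e2: "exp (1::real) \<ge> 2" using exp_ge_add_one_self[of "1::real"] by simp
  have "(2::real)^7 \<le> exp 1 ^ 7" by (rule power_mono[OF e2]) simp
  also have "exp (1::real) ^ 7 = exp 7" using exp_of_nat_mult[of 7 "1::real"] by simp
  finally have "(100::real) \<le> exp 7" by simp
  hence L7: "L \<le> 7" unfolding L_def by (metis exp_gt_zero ln_exp ln_le_cancel_iff zero_less_numeral)
  have h1: "1 - z = complex_of_real (1/100)" by (simp add: z_def)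
  have "mlog z = - of_real (ln (1/100))" unfolding mlog_def h1 by (subst Ln_of_real) simp_all
  also have "ln (1/100::real) = - L" by (simp add: L_def ln_div)
  finally have mz: "mlog z = of_real L" by simp
  have dz: "deriv mlog z = 100" using mlog_props(2)[OF zb(1)] by (simp add: z_def)
  define v where "v = (99/100 / L)^2 * 100 - 1"
  have E: "(z / mlog z)^2 * deriv mlog z - 1 = of_real v"
    unfolding mz dz v_def by (simp add: z_def)
  have "(99/100 / L)^2 * 100 \<ge> 2"
  proof -
    have "L^2 \<le> 49" using L7 Lpos power_mono[OF L7, of 2] by simp
    hence "(99/100 / L)^2 * 100 = 9801 / 100 / L^2" by (simp add: power_divide)
    moreover have "9801 / 100 / L^2 \<ge> 2" using \<open>L^2 \<le> 49\<close> Lpos by (simp add: field_simps)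
    ultimately show ?thesis by simp
  qed
  hence "v \<ge> 1" by (simp add: v_def)
  hence "norm (of_real v :: complex) \<ge> 1" by simp
  hence "norm ((z / mlog z)^2 * deriv mlog z - 1) \<ge> 1" unfolding E .
  thus False using U zb by (auto simp: classU_def)
qed

theorem theorem3:
  shows "(\<forall>\<alpha>::real. \<alpha> \<le> -1 \<longrightarrow> alpha_convex \<alpha> \<subseteq> classU) \<and>
         (\<forall>\<alpha>::real. 0 \<le> \<alpha> \<and> \<alpha> \<le> 1 \<longrightarrow> \<not> (alpha_convex \<alpha> \<subseteq> classU))"
  using part_a mlog_conv mlog_notU by blast

end
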